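(* Run xOrder with criterion $F=\widehat G_0$ (i.e. $\lambda=0$). Then the output $o^*(n^a,n^b)$ is a cross-group ordering that maximizes $\mathrm{AUC}(o)$ (equivalently $\mathrm{AUC}(o)-\lambda\Delta\mathrm{xAUC}(o)$ with $\lambda=0$) over all cross-group orderings $o$ of $\mathrm{p}^a$ and $\mathrm{p}^b$.
   Context: Setting: two disjoint finite groups $a$, $b$ of samples, each sample $u$ having label $Y_u\in\{0,1\}$; $n^a,n^b$ group sizes, $n_1^a,n_0^a$ numbers of label-1/label-0 samples in $a$ (similarly for $b$), all $\ge1$, $n_1=n_1^a+n_1^b$, $n_0=n_0^a+n_0^b$, $k=n_0n_1$, $k_{a,b}=n_1^an_0^b$, $k_{b,a}=n_0^an_1^b$. Fixed within-group rankings $\mathrm{p}^a=(\mathrm{p}^{a(1)},\dots,\mathrm{p}^{a(n^a)})$, $\mathrm{p}^b=(\mathrm{p}^{b(1)},\dots,\mathrm{p}^{b(n^b)})$. A cross-group ordering is a ranked list of all samples of $a\cup b$ whose restrictions to $a,b$ are $\mathrm{p}^a,\mathrm{p}^b$; $\mathrm{AUC}(o)=\frac1{n_1n_0}\#\{(u,v):Y_u=1,Y_v=0,u\text{ above }v\text{ in }o\}$; $\mathrm{xAUC}_o(a,b)$ is the fraction of pairs (label-1 sample of $a$, label-0 sample of $b$) in which the first is ranked above the second, $\mathrm{xAUC}_o(b,a)$ symmetrically, $\Delta\mathrm{xAUC}(o)=|\mathrm{xAUC}_o(a,b)-\mathrm{xAUC}_o(b,a)|$. Partial orderings: for $0\le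 i\le n^a$, $0\le j\le n^b$, an $(i,j)$-partial ordering is a ranked list of $\mathrm{p}^{a(1)},\dots,\mathrm{p}^{a(i)},\mathrm{p}^{b(1)},\dots,\mathrm{p}^{b(j)}$ preserving the within-group orders. For such $o$ define $H_{ab}(o)$ as the number of pairs $(k,h)$ with $1\le k\le i$, $1\le h\le n^b$, $Y_{\mathrm{p}^{a(k)}}=1$, $Y_{\mathrm{p}^{b(h)}}=0$, and either $h>j$ or ($h\le j$ and $\mathrm{p}^{a(k)}$ precedes $\mathrm{p}^{b(h)}$ in $o$); and $H_{ba}(o)$ as the number of pairs $(h,k)$ with $1\le h\le j$, $1\le k\le n^a$, $Y_{\mathrm{p}^{b(h)}}=1$, $Y_{\mathrm{p}^{a(k)}}=0$, and either $k>i$ or ($k\le i$ and $\mathrm{p}^{b(h)}$ precedes $\mathrm{p}^{a(k)}$ in $o$). For $\lambda\ge0$ set $\widehat G_\lambda(o)=H_{ab}(o)+H_{ba}(o)-\lambda k\,\big|H_{ab}(o)/k_{a,b}-H_{ba}(o)/k_{b,a}\big|$, and $\widehat G_\infty(o)=-\big|H_{ab}(o)/k_{a,b}-H_{ba}(o)/k_{b,a}\big|$. (For $(i,j)=(n^a,n^b)$, $H_{ab}=k_{a,b}\mathrm{xAUC}_o(a,b)$ and $H_{ba}=k_{b,a}\mathrm{xAUC}_o(b,a)$.) xOrder with criterion $F$: set $o^*(i,0)=(\mathrm{p}^{a(1)},\dots,\mathrm{p}^{a(i)})$ and $o^*(0,j)=(\mathrm{p}^{b(1)},\dots,\mathrm{p}^{b(j)})$;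 for $i=1,\dots,n^a$ and (inner loop) $j=1,\dots,n^b$, let $c_a=o^*(i-1,j)\oplus\mathrm{p}^{a(i)}$ and $c_b=o^*(i,j-1)\oplus\mathrm{p}^{b(j)}$, where $\oplus$ appends an element at the bottom of the list, and set $o^*(i,j)=c_a$ if $F(c_a)>F(c_b)$, otherwise $o^*(i,j)=c_b$. The output is $o^*(n^a,n^b)$. *)

theory Defs
  imports Complex_Main
begin

text \<open>Group a is set pa, group b is set pb, where
pa, pb are the fixed within-group rankings (index 0 = top). Labels: Y u = True means
label 1, Y u = False means label 0. In a list, earlier position = ranked higher.\<close>

definition precedes :: "'a list \<Rightarrow> 'a \<Rightarrow> 'a \<Rightarrow> bool" where
  "precedes o' u v \<longleftrightarrow> (\<exists>p q. p < q \<and> q < length o' \<and> o' ! p = u \<and> o' ! q = v)"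

definition cross_ordering :: "'a list \<Rightarrow> 'a list \<Rightarrow> 'a list \<Rightarrow> bool" where
  "cross_ordering pa pb o' \<longleftrightarrow>
     distinct o' \<and> set o' = set pa \<union> set pb \<and>
     filter (\<lambda>x. x \<in> set pa) o' = pa \<and> filter (\<lambda>x. x \<in> set pb) o' = pb"

definition n1 :: "('a \<Rightarrow> bool) \<Rightarrow> 'a list \<Rightarrow> 'a list \<Rightarrow> nat" where
  "n1 Y pa pb = card {u \<in> set pa \<union> set pb. Y u}"

definition n0 :: "('a \<Rightarrow> bool) \<Rightarrow> 'a list \<Rightarrow> 'a list \<Rightarrow> nat" where
  "n0 Y pa pb = card {u \<in> set pa \<union> set pb. \<not> Y u}"

definition AUC :: "('a \<Rightarrow> bool) \<Rightarrow> 'a list \<Rightarrow> 'a list \<Rightarrow> 'a list \<Rightarrow> real" where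
  "AUC Y pa pb o' =
     real (card {(u, v). u \<in> set o' \<and> v \<in> set o' \<and> Y u \<and> \<not> Y v \<and> precedes o' u v})
     / (real (n1 Y pa pb) * real (n0 Y pa pb))"

definition cnt1 :: "('a \<Rightarrow> bool) \<Rightarrow> 'a list \<Rightarrow> nat" where
  "cnt1 Y p = card {u \<in> set p. Y u}"

definition cnt0 :: "('a \<Rightarrow> bool) \<Rightarrow> 'a list \<Rightarrow> nat" where
  "cnt0 Y p = card {u \<in> set p. \<not> Y u}"

text \<open>H_ab and H_ba of an (i,j)-partial ordering o' (1-based indices k,h of the paper
become 0-based positions k-1, h-1 here).\<close>
definition H_ab :: "('a \<Rightarrow> bool) \<Rightarrow> 'a list \<Rightarrow> 'a list \<Rightarrow> nat \<Rightarrow> nat \<Rightarrow> 'a list \<Rightarrow> nat" where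
  "H_ab Y pa pb i j o' = card {(k, h). 1 \<le> k \<and> k \<le> i \<and> 1 \<le> h \<and> h \<le> length pb \<and>
      Y (pa ! (k - 1)) \<and> \<not> Y (pb ! (h - 1)) \<and>
      (h > j \<or> (h \<le> j \<and> precedes o' (pa ! (k - 1)) (pb ! (h - 1))))}"

definition H_ba :: "('a \<Rightarrow> bool) \<Rightarrow> 'a list \<Rightarrow> 'a list \<Rightarrow> nat \<Rightarrow> nat \<Rightarrow> 'a list \<Rightarrow> nat" where
  "H_ba Y pa pb i j o' = card {(h, k). 1 \<le> h \<and> h \<le> j \<and> 1 \<le> k \<and> k \<le> length pa \<and>
      Y (pb ! (h - 1)) \<and> \<not> Y (pa ! (k - 1)) \<and>
      (k > i \<or> (k \<le> i \<and> precedes o' (pb ! (h - 1)) (pa ! (k - 1))))}"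

definition G_hat :: "real \<Rightarrow> ('a \<Rightarrow> bool) \<Rightarrow> 'a list \<Rightarrow> 'a list \<Rightarrow> nat \<Rightarrow> nat \<Rightarrow> 'a list \<Rightarrow> real" where
  "G_hat lam Y pa pb i j o' =
     (let hab = real (H_ab Y pa pb i j o'); hba = real (H_ba Y pa pb i j o');
          k = real (n0 Y pa pb) * real (n1 Y pa pb);
          kab = real (cnt1 Y pa) * real (cnt0 Y pb);
          kba = real (cnt0 Y pa) * real (cnt1 Y pb)
      in hab + hba - lam * k * \<bar>hab / kab - hba / kba\<bar>)"

fun xorder_tab :: "(nat \<Rightarrow> nat \<Rightarrow> 'a list \<Rightarrow> real) \<Rightarrow> 'a list \<Rightarrow> 'a list \<Rightarrow> nat \<Rightarrow> nat \<Rightarrow> 'a list" where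
  "xorder_tab F pa pb 0 j = take j pb"
| "xorder_tab F pa pb (Suc i) 0 = take (Suc i) pa"
| "xorder_tab F pa pb (Suc i) (Suc j) =
     (let ca = xorder_tab F pa pb i (Suc j) @ [pa ! i];
          cb = xorder_tab F pa pb (Suc i) j @ [pb ! j]
      in if F (Suc i) (Suc j) ca > F (Suc i) (Suc j) cb then ca else cb)"

definition xOrder :: "(nat \<Rightarrow> nat \<Rightarrow> 'a list \<Rightarrow> real) \<Rightarrow> 'a list \<Rightarrow> 'a list \<Rightarrow> 'a list" where
  "xOrder F pa pb = xorder_tab F pa pb (length pa) (length pb)"

end

theory Submission
  imports Defs
begin

lemma precedes_Nil[simp]: "\<not> precedes [] u v" by (simp add: precedes_def)

lemma precedes_set: "precedes xs u v \<Longrightarrow> u \<in> set xs \<and> v \<in> set xs"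
  by (auto simp: precedes_def)

lemma precedes_snoc: "precedes (xs@[x]) u v \<longleftrightarrow> precedes xs u v \<or> (u \<in> set xs \<and> v = x)"
proof
  assume "precedes (xs@[x]) u v"
  then obtain p q where pq: "p < q" "q < Suc (length xs)" "(xs@[x]) ! p = u" "(xs@[x]) ! q = v"
    unfolding precedes_def by auto
  show "precedes xs u v \<or> (u \<in> set xs \<and> v = x)"
  proof (cases "q < length xs")
    case True
    then show ?thesis using pq unfolding precedes_def by (auto simp: nth_append)
  next
    case False
    then have "q = length xs" using pq by auto
    then show ?thesis using pq by (auto simp: nth_append)
  qed
next
  assume "precedes xs u v \<or> (u \<in> set xs \<and> v = x)"
  then show "precedes (xs@[x]) u v"
  proof
    assume "precedes xs u v"
    then obtain p q where "p < q" "q < length xs" "xs ! p = u" "xs ! q = v"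
      unfolding precedes_def by auto
    then show ?thesis unfolding precedes_def
      by (rule_tac x=p in exI, rule_tac x=q in exI) (auto simp: nth_append)
  next
    assume "u \<in> set xs \<and> v = x"
    then obtain p where "p < length xs" "xs ! p = u" "v = x" by (auto simp: in_set_conv_nth)
    then show ?thesis unfolding precedes_def
      by (rule_tac x=p in exI, rule_tac x="length xs" in exI) (auto simp: nth_append)
  qed
qed

lemma precedes_Cons: "precedes (x#xs) u v \<longleftrightarrow> (u = x \<and> v \<in> set xs) \<or> precedes xs u v"
proof
  assume "precedes (x#xs) u v"
  then obtain p q where pq: "p < q" "q < Suc (length xs)" "(x#xs) ! p = u" "(x#xs) ! q = v"
    unfolding precedes_def by auto
  show "(u = x \<and> v \<in> set xs) \<or> precedes xs u v"
  proof (cases p)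
    case 0
    then show ?thesis using pq by (cases q) auto
  next
    case (Suc p')
    then obtain q' where "q = Suc q'" using pq by (cases q) auto
    then show ?thesis using pq Suc unfolding precedes_def by auto
  qed
next
  assume "(u = x \<and> v \<in> set xs) \<or> precedes xs u v"
  then show "precedes (x#xs) u v"
  proof
    assume "u = x \<and> v \<in> set xs"
    then obtain q where "q < length xs" "xs ! q = v" "u = x" by (auto simp: in_set_conv_nth)
    then show ?thesis unfolding precedes_def
      by (rule_tac x=0 in exI, rule_tac x="Suc q" in exI) auto
  next
    assume "precedes xs u v"
    then obtain p q where "p < q" "q < length xs" "xs ! p = u" "xs ! q = v"
      unfolding precedes_def by auto
    then show ?thesis unfolding precedes_def
      by (rule_tac x="Suc p" in exI, rule_tac x="Suc q" in exI) auto
  qed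
qed

lemma precedes_filter: "P u \<Longrightarrow> P v \<Longrightarrow> precedes (filter P xs) u v \<longleftrightarrow> precedes xs u v"
  by (induction xs) (auto simp: precedes_Cons)

inductive po :: "'a list \<Rightarrow> 'a list \<Rightarrow> nat \<Rightarrow> nat \<Rightarrow> 'a list \<Rightarrow> bool" for pa pb where
  po0: "po pa pb 0 0 []"
| poA: "po pa pb i j o' \<Longrightarrow> i < length pa \<Longrightarrow> po pa pb (Suc i) j (o' @ [pa ! i])"
| poB: "po pa pb i j o' \<Longrightarrow> j < length pb \<Longrightarrow> po pa pb i (Suc j) (o' @ [pb ! j])"

lemma po_sym: "po pa pb i j o' \<Longrightarrow> po pb pa j i o'"
  by (induction rule: po.induct) (auto intro: po.intros)

lemma po_inv:
  assumes "po pa pb i j o'" "distinct pa" "distinct pb" "set pa \<inter> set pb = {}"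
  shows "i \<le> length pa \<and> j \<le> length pb \<and> set o' = set (take i pa) \<union> set (take j pb) \<and>
    filter (\<lambda>x. x \<in> set pa) o' = take i pa \<and> filter (\<lambda>x. x \<in> set pb) o' = take j pb \<and> distinct o'"
  using assms
proof (induction rule: po.induct)
  case po0
  then show ?case by simp
next
  case (poA i j o')
  have n1: "pa ! i \<notin> set (take i pa)" using poA by (simp add: in_set_conv_nth nth_eq_iff_index_eq)
  have n2: "pa ! i \<notin> set pb" using poA by (auto dest: nth_mem)
  have n3: "pa ! i \<notin> set (take j pb)" using n2 by (meson in_set_takeD)
  show ?case using poA n1 n2 n3 by (auto simp: take_Suc_conv_app_nth)
next
  case (poB i j o')
  have n1: "pb ! j \<notin> set (take j pb)" using poB by (simp add: in_set_conv_nth nth_eq_iff_index_eq)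
  have n2: "pb ! j \<notin> set pa" using poB by (auto dest: nth_mem)
  have n3: "pb ! j \<notin> set (take i pa)" using n2 by (meson in_set_takeD)
  show ?case using poB n1 n2 n3 by (auto simp: take_Suc_conv_app_nth)
qed

lemma po_i0: "po pa pb i j o' \<Longrightarrow> i = 0 \<Longrightarrow> o' = take j pb"
  by (induction rule: po.induct) (auto simp: take_Suc_conv_app_nth)

lemma po_j0: "po pa pb i j o' \<Longrightarrow> j = 0 \<Longrightarrow> o' = take i pa"
  by (induction rule: po.induct) (auto simp: take_Suc_conv_app_nth)

lemma po_take_b: "j \<le> length pb \<Longrightarrow> po pa pb 0 j (take j pb)"
  by (induction j) (auto simp: take_Suc_conv_app_nth intro: po.intros)

lemma po_take_a: "i \<le> length pa \<Longrightarrow> po pa pb i 0 (take i pa)"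
  by (induction i) (auto simp: take_Suc_conv_app_nth intro: po.intros)


definition RA :: "('a \<Rightarrow> bool) \<Rightarrow> 'a list \<Rightarrow> 'a list \<Rightarrow> nat \<Rightarrow> nat \<Rightarrow> (nat \<times> nat) set" where
  "RA Y pa pb i j = {(k, h). k = Suc i \<and> 1 \<le> h \<and> h \<le> length pb \<and> Y (pa ! i) \<and> \<not> Y (pb ! (h - 1)) \<and> j < h}"

lemma H_ab_fin: fixes i :: nat shows "finite {(k, h). 1 \<le> k \<and> k \<le> i \<and> 1 \<le> h \<and> h \<le> length pb \<and> P k h}"
proof (rule finite_subset)
  show "{(k, h). 1 \<le> k \<and> k \<le> i \<and> 1 \<le> h \<and> h \<le> length pb \<and> P k h} \<subseteq> {1..i} \<times> {1..length pb}" by auto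
  show "finite ({1..i} \<times> {1..length pb})" by (rule finite_cartesian_product) simp_all
qed

lemma L1:
  assumes "po pa pb i j o'" "i < length pa" "distinct pa" "distinct pb" "set pa \<inter> set pb = {}"
  shows "H_ab Y pa pb (Suc i) j (o' @ [pa ! i]) = H_ab Y pa pb i j o' + card (RA Y pa pb i j)"
proof -
  note inv = po_inv[OF assms(1,3,4,5)]
  have a1: "pa ! i \<notin> set (take i pa)" using assms by (simp add: in_set_conv_nth nth_eq_iff_index_eq)
  have a2: "pa ! i \<notin> set pb" using assms by (auto dest: nth_mem)
  have ano: "pa ! i \<notin> set o'" using inv a1 a2 by (auto dest: in_set_takeD)
  have bne0: "\<And>h. h < length pb \<Longrightarrow> pb ! h \<noteq> pa ! i" using assms by (metis disjoint_iff nth_mem)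
  have bne: "\<And>h. 1 \<le> h \<Longrightarrow> h \<le> length pb \<Longrightarrow> pb ! (h - 1) \<noteq> pa ! i"
    by (rule bne0) arith
  let ?S = "{(k, h). 1 \<le> k \<and> k \<le> i \<and> 1 \<le> h \<and> h \<le> length pb \<and>
      Y (pa ! (k - 1)) \<and> \<not> Y (pb ! (h - 1)) \<and>
      (h > j \<or> (h \<le> j \<and> precedes o' (pa ! (k - 1)) (pb ! (h - 1))))}"
  let ?S' = "{(k, h). 1 \<le> k \<and> k \<le> Suc i \<and> 1 \<le> h \<and> h \<le> length pb \<and>
      Y (pa ! (k - 1)) \<and> \<not> Y (pb ! (h - 1)) \<and>
      (h > j \<or> (h \<le> j \<and> precedes (o' @ [pa ! i]) (pa ! (k - 1)) (pb ! (h - 1))))}"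
  have eq: "?S' = ?S \<union> RA Y pa pb i j"
  proof (rule set_eqI, clarify)
    fix k h
    show "((k, h) \<in> ?S') = ((k, h) \<in> ?S \<union> RA Y pa pb i j)"
    proof (cases "k = Suc i")
      case True
      then show ?thesis using ano bne[of h] by (auto simp: RA_def precedes_snoc dest: precedes_set)
    next
      case False
      then show ?thesis using bne[of h] by (auto simp: RA_def precedes_snoc)
    qed
  qed
  have fin1: "finite ?S" by (rule H_ab_fin)
  have fin2: "finite (RA Y pa pb i j)"
  proof (rule finite_subset)
    show "RA Y pa pb i j \<subseteq> {Suc i} \<times> {1..length pb}" by (auto simp: RA_def)
    show "finite ({Suc i} \<times> {1..length pb})" by (rule finite_cartesian_product) simp_all
  qed
  have dis: "?S \<inter> RA Y pa pb i j = {}" by (auto simp: RA_def)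
  show ?thesis unfolding H_ab_def using eq card_Un_disjoint[OF fin1 fin2 dis] by simp
qed

lemma L2:
  assumes "po pa pb i j o'" "i < length pa" "distinct pa" "distinct pb" "set pa \<inter> set pb = {}"
  shows "H_ab Y pb pa j (Suc i) (o' @ [pa ! i]) = H_ab Y pb pa j i o'"
proof -
  note inv = po_inv[OF assms(1,3,4,5)]
  have bin0: "\<And>k. k < j \<Longrightarrow> pb ! k \<in> set o'" using inv
    by (auto simp: in_set_conv_nth)
  have bin: "\<And>k. 1 \<le> k \<Longrightarrow> k \<le> j \<Longrightarrow> pb ! (k - 1) \<in> set o'"
    by (rule bin0) arith
  have ane0: "\<And>h. h < i \<Longrightarrow> pa ! h \<noteq> pa ! i" using assms by (simp add: nth_eq_iff_index_eq)
  have ane: "\<And>h. 1 \<le> h \<Longrightarrow> h \<le> i \<Longrightarrow> pa ! (h - 1) \<noteq> pa ! i"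
    by (rule ane0) arith
  show ?thesis unfolding H_ab_def
  proof (rule arg_cong[where f=card], rule set_eqI, clarify)
    fix k h
    show "((k, h) \<in> {(k, h). 1 \<le> k \<and> k \<le> j \<and> 1 \<le> h \<and> h \<le> length pa \<and>
      Y (pb ! (k - 1)) \<and> \<not> Y (pa ! (h - 1)) \<and>
      (h > Suc i \<or> (h \<le> Suc i \<and> precedes (o' @ [pa ! i]) (pb ! (k - 1)) (pa ! (h - 1))))}) =
      ((k, h) \<in> {(k, h). 1 \<le> k \<and> k \<le> j \<and> 1 \<le> h \<and> h \<le> length pa \<and>
      Y (pb ! (k - 1)) \<and> \<not> Y (pa ! (h - 1)) \<and>
      (h > i \<or> (h \<le> i \<and> precedes o' (pb ! (k - 1)) (pa ! (h - 1))))})"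
    proof (cases "h = Suc i")
      case True
      then show ?thesis using bin[of k] by (auto simp: precedes_snoc)
    next
      case False
      then show ?thesis using ane[of h] by (auto simp: precedes_snoc)
    qed
  qed
qed


definition V :: "('a \<Rightarrow> bool) \<Rightarrow> 'a list \<Rightarrow> 'a list \<Rightarrow> nat \<Rightarrow> nat \<Rightarrow> 'a list \<Rightarrow> nat" where
  "V Y pa pb i j o' = H_ab Y pa pb i j o' + H_ab Y pb pa j i o'"

lemma H_ba_swap: "H_ba Y pa pb i j o' = H_ab Y pb pa j i o'"
  by (simp add: H_ab_def H_ba_def)

lemma G_hat0: "G_hat 0 Y pa pb i j o' = real (V Y pa pb i j o')"
  by (simp add: G_hat_def V_def H_ba_swap Let_def)

lemma VA:
  assumes "po pa pb i j o'" "i < length pa" "distinct pa" "distinct pb" "set pa \<inter> set pb = {}"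
  shows "V Y pa pb (Suc i) j (o' @ [pa ! i]) = V Y pa pb i j o' + card (RA Y pa pb i j)"
  using L1[OF assms] L2[OF assms] by (simp add: V_def)

lemma VB:
  assumes "po pa pb i j o'" "j < length pb" "distinct pa" "distinct pb" "set pa \<inter> set pb = {}"
  shows "V Y pa pb i (Suc j) (o' @ [pb ! j]) = V Y pa pb i j o' + card (RA Y pb pa j i)"
proof -
  have d: "set pb \<inter> set pa = {}" using assms by blast
  show ?thesis using L1[OF po_sym[OF assms(1)] assms(2,4,3) d, of Y]
      L2[OF po_sym[OF assms(1)] assms(2,4,3) d, of Y] by (simp add: V_def)
qed

lemma po_SS: "po pa pb (Suc i) (Suc j) o' \<Longrightarrow>
   (\<exists>o0. o' = o0 @ [pa ! i] \<and> po pa pb i (Suc j) o0) \<or> (\<exists>o0. o' = o0 @ [pb ! j] \<and> po pa pb (Suc i) j o0)"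
  by (cases rule: po.cases) auto

lemma DP:
  assumes "F = G_hat 0 Y pa pb" "distinct pa" "distinct pb" "set pa \<inter> set pb = {}"
    "i \<le> length pa" "j \<le> length pb"
  shows "po pa pb i j (xorder_tab F pa pb i j) \<and>
     (\<forall>o'. po pa pb i j o' \<longrightarrow> V Y pa pb i j o' \<le> V Y pa pb i j (xorder_tab F pa pb i j))"
  using assms
proof (induction F pa pb i j rule: xorder_tab.induct)
  case (1 F pa pb j)
  then show ?case using po_take_b[of j pb pa] by (auto dest: po_i0)
next
  case (2 F pa pb i)
  then show ?case using po_take_a[of "Suc i" pa pb] by (auto dest: po_j0)
next
  case (3 F pa pb i j)
  let ?ca = "xorder_tab F pa pb i (Suc j) @ [pa ! i]"
  let ?cb = "xorder_tab F pa pb (Suc i) j @ [pb ! j]"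
  have IA: "po pa pb i (Suc j) (xorder_tab F pa pb i (Suc j))"
    "\<And>o'. po pa pb i (Suc j) o' \<Longrightarrow> V Y pa pb i (Suc j) o' \<le> V Y pa pb i (Suc j) (xorder_tab F pa pb i (Suc j))"
    using "3.IH"(1) "3.prems" by auto
  have IB: "po pa pb (Suc i) j (xorder_tab F pa pb (Suc i) j)"
    "\<And>o'. po pa pb (Suc i) j o' \<Longrightarrow> V Y pa pb (Suc i) j o' \<le> V Y pa pb (Suc i) j (xorder_tab F pa pb (Suc i) j)"
    using "3.IH"(2) "3.prems" by auto
  have i: "i < length pa" and j: "j < length pb" using "3.prems" by auto
  have pca: "po pa pb (Suc i) (Suc j) ?ca" using IA(1) i by (rule poA)
  have pcb: "po pa pb (Suc i) (Suc j) ?cb" using IB(1) j by (rule poB)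
  have vca: "V Y pa pb (Suc i) (Suc j) ?ca = V Y pa pb i (Suc j) (xorder_tab F pa pb i (Suc j)) + card (RA Y pa pb i (Suc j))"
    using VA[OF IA(1) i] "3.prems" by simp
  have vcb: "V Y pa pb (Suc i) (Suc j) ?cb = V Y pa pb (Suc i) j (xorder_tab F pa pb (Suc i) j) + card (RA Y pb pa j (Suc i))"
    using VB[OF IB(1) j] "3.prems" by simp
  define r where "r = xorder_tab F pa pb (Suc i) (Suc j)"
  have r: "r = (if F (Suc i) (Suc j) ?ca > F (Suc i) (Suc j) ?cb then ?ca else ?cb)"
    unfolding r_def by (simp add: Let_def)
  have Fv: "\<And>x. F (Suc i) (Suc j) x = real (V Y pa pb (Suc i) (Suc j) x)"
    using "3.prems" by (simp add: G_hat0)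
  have ge: "V Y pa pb (Suc i) (Suc j) ?ca \<le> V Y pa pb (Suc i) (Suc j) r \<and>
            V Y pa pb (Suc i) (Suc j) ?cb \<le> V Y pa pb (Suc i) (Suc j) r"
    using r Fv by (auto split: if_splits)
  have por: "po pa pb (Suc i) (Suc j) r" using r pca pcb by auto
  have "V Y pa pb (Suc i) (Suc j) o' \<le> V Y pa pb (Suc i) (Suc j) r" if "po pa pb (Suc i) (Suc j) o'" for o'
    using po_SS[OF that]
  proof
    assume "\<exists>o0. o' = o0 @ [pa ! i] \<and> po pa pb i (Suc j) o0"
    then obtain o0 where o0: "o' = o0 @ [pa ! i]" "po pa pb i (Suc j) o0" by blast
    have "V Y pa pb (Suc i) (Suc j) o' = V Y pa pb i (Suc j) o0 + card (RA Y pa pb i (Suc j))"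
      using VA[OF o0(2) i] "3.prems" o0(1) by simp
    then show ?thesis using IA(2)[OF o0(2)] vca ge by linarith
  next
    assume "\<exists>o0. o' = o0 @ [pb ! j] \<and> po pa pb (Suc i) j o0"
    then obtain o0 where o0: "o' = o0 @ [pb ! j]" "po pa pb (Suc i) j o0" by blast
    have "V Y pa pb (Suc i) (Suc j) o' = V Y pa pb (Suc i) j o0 + card (RA Y pb pa j (Suc i))"
      using VB[OF o0(2) j] "3.prems" o0(1) by simp
    then show ?thesis using IB(2)[OF o0(2)] vcb ge by linarith
  qed
  then show ?case using por unfolding r_def by blast
qed


lemma po_cross:
  assumes "po pa pb (length pa) (length pb) o'" "distinct pa" "distinct pb" "set pa \<inter> set pb = {}"
  shows "cross_ordering pa pb o'"
  using po_inv[OF assms] unfolding cross_ordering_def by simp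

lemma cross_po_gen:
  assumes "set pa \<inter> set pb = {}"
  shows "set o' \<subseteq> set pa \<union> set pb \<Longrightarrow> filter (\<lambda>x. x \<in> set pa) o' = take i pa \<Longrightarrow>
    filter (\<lambda>x. x \<in> set pb) o' = take j pb \<Longrightarrow> i \<le> length pa \<Longrightarrow> j \<le> length pb \<Longrightarrow> po pa pb i j o'"
proof (induction o' arbitrary: i j rule: rev_induct)
  case Nil
  then have "i = 0" "j = 0" by auto
  then show ?case by (simp add: po0)
next
  case (snoc x o0)
  show ?case
  proof (cases "x \<in> set pa")
    case True
    then have xb: "x \<notin> set pb" using assms by blast
    have fa: "filter (\<lambda>x. x \<in> set pa) o0 @ [x] = take i pa" using snoc.prems True by simp
    then obtain i' where i': "i = Suc i'" by (cases i) auto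
    have il: "i' < length pa" using i' snoc.prems by auto
    have "take i pa = take i' pa @ [pa ! i']" using i' il by (simp add: take_Suc_conv_app_nth)
    then have f1: "filter (\<lambda>x. x \<in> set pa) o0 = take i' pa" and x: "x = pa ! i'" using fa by auto
    have f2: "filter (\<lambda>x. x \<in> set pb) o0 = take j pb" using snoc.prems xb by simp
    have "po pa pb i' j o0" using snoc.IH[OF _ f1 f2] snoc.prems il by auto
    then show ?thesis using poA[OF _ il] x i' by auto
  next
    case False
    then have xb: "x \<in> set pb" using snoc.prems by auto
    have fa: "filter (\<lambda>x. x \<in> set pb) o0 @ [x] = take j pb" using snoc.prems xb by simp
    then obtain j' where j': "j = Suc j'" by (cases j) auto
    have jl: "j' < length pb" using j' snoc.prems by auto
    have "take j pb = take j' pb @ [pb ! j']" using j' jl by (simp add: take_Suc_conv_app_nth)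
    then have f2: "filter (\<lambda>x. x \<in> set pb) o0 = take j' pb" and x: "x = pb ! j'" using fa by auto
    have f1: "filter (\<lambda>x. x \<in> set pa) o0 = take i pa" using snoc.prems False by simp
    have "po pa pb i j' o0" using snoc.IH[OF _ f1 f2] snoc.prems jl by auto
    then show ?thesis using poB[OF _ jl] x j' by auto
  qed
qed

lemma cross_po:
  assumes "cross_ordering pa pb o'" "set pa \<inter> set pb = {}"
  shows "po pa pb (length pa) (length pb) o'"
  using assms cross_po_gen[OF assms(2), of o' "length pa" "length pb"]
  unfolding cross_ordering_def by auto

lemma TAB:
  assumes "distinct pa" "distinct pb"
  shows "card {(u, v). u \<in> set pa \<and> v \<in> set pb \<and> Y u \<and> \<not> Y v \<and> precedes o' u v}
     = H_ab Y pa pb (length pa) (length pb) o'"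
proof -
  let ?H = "{(k, h). 1 \<le> k \<and> k \<le> length pa \<and> 1 \<le> h \<and> h \<le> length pb \<and>
      Y (pa ! (k - 1)) \<and> \<not> Y (pb ! (h - 1)) \<and>
      (h > length pb \<or> (h \<le> length pb \<and> precedes o' (pa ! (k - 1)) (pb ! (h - 1))))}"
  let ?f = "\<lambda>(k, h). (pa ! (k - 1), pb ! (h - 1))"
  have inj: "inj_on ?f ?H"
    unfolding inj_on_def using assms by (auto simp: nth_eq_iff_index_eq)
  have img: "?f ` ?H = {(u, v). u \<in> set pa \<and> v \<in> set pb \<and> Y u \<and> \<not> Y v \<and> precedes o' u v}"
  proof
    show "?f ` ?H \<subseteq> {(u, v). u \<in> set pa \<and> v \<in> set pb \<and> Y u \<and> \<not> Y v \<and> precedes o' u v}" by auto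
  next
    show "{(u, v). u \<in> set pa \<and> v \<in> set pb \<and> Y u \<and> \<not> Y v \<and> precedes o' u v} \<subseteq> ?f ` ?H"
    proof clarify
      fix u v assume uv: "u \<in> set pa" "v \<in> set pb" "Y u" "\<not> Y v" "precedes o' u v"
      obtain p where p: "p < length pa" "pa ! p = u" using uv by (auto simp: in_set_conv_nth)
      obtain q where q: "q < length pb" "pb ! q = v" using uv by (auto simp: in_set_conv_nth)
      have "(Suc p, Suc q) \<in> ?H" using p q uv by auto
      moreover have "(u, v) = ?f (Suc p, Suc q)" using p q by simp
      ultimately show "(u, v) \<in> ?f ` ?H" by blast
    qed
  qed
  show ?thesis unfolding H_ab_def using card_image[OF inj] img by simp
qed

lemma TAA:
  assumes "filter (\<lambda>x. x \<in> set pa) o' = pa"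
  shows "{(u, v). u \<in> set pa \<and> v \<in> set pa \<and> Y u \<and> \<not> Y v \<and> precedes o' u v} =
         {(u, v). u \<in> set pa \<and> v \<in> set pa \<and> Y u \<and> \<not> Y v \<and> precedes pa u v}"
  using precedes_filter[of "\<lambda>x. x \<in> set pa" _ _ o'] assms by auto

definition CA :: "('a \<Rightarrow> bool) \<Rightarrow> 'a list \<Rightarrow> nat" where
  "CA Y p = card {(u, v). u \<in> set p \<and> v \<in> set p \<and> Y u \<and> \<not> Y v \<and> precedes p u v}"

lemma count_eq:
  assumes "cross_ordering pa pb o'" "distinct pa" "distinct pb" "set pa \<inter> set pb = {}"
  shows "card {(u, v). u \<in> set o' \<and> v \<in> set o' \<and> Y u \<and> \<not> Y v \<and> precedes o' u v}
    = CA Y pa + CA Y pb + V Y pa pb (length pa) (length pb) o'"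
proof -
  have so: "set o' = set pa \<union> set pb" and fa: "filter (\<lambda>x. x \<in> set pa) o' = pa"
    and fb: "filter (\<lambda>x. x \<in> set pb) o' = pb" using assms(1) unfolding cross_ordering_def by auto
  define T where "T = (\<lambda>A B. {(u, v). u \<in> A \<and> v \<in> B \<and> Y u \<and> \<not> Y v \<and> precedes o' u v})"
  have fin: "\<And>A B. finite A \<Longrightarrow> finite B \<Longrightarrow> finite (T A B)"
  proof -
    fix A B :: "'a set" assume "finite A" "finite B"
    then have "finite (A \<times> B)" by simp
    moreover have "T A B \<subseteq> A \<times> B" unfolding T_def by auto
    ultimately show "finite (T A B)" by (rule finite_subset[rotated])
  qed
  let ?A = "set pa" and ?B = "set pb"
  have dec: "T (set o') (set o') = (T ?A ?A \<union> T ?B ?B) \<union> (T ?A ?B \<union> T ?B ?A)"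
    unfolding so T_def by auto
  have d1: "T ?A ?A \<inter> T ?B ?B = {}" using assms(4) unfolding T_def by auto
  have d2: "T ?A ?B \<inter> T ?B ?A = {}" using assms(4) unfolding T_def by auto
  have d3: "(T ?A ?A \<union> T ?B ?B) \<inter> (T ?A ?B \<union> T ?B ?A) = {}" using assms(4) unfolding T_def by auto
  have "card (T (set o') (set o')) = card (T ?A ?A) + card (T ?B ?B) + (card (T ?A ?B) + card (T ?B ?A))"
    unfolding dec using fin d1 d2 d3 by (simp add: card_Un_disjoint)
  moreover have "card (T ?A ?A) = CA Y pa" unfolding T_def CA_def using TAA[OF fa] by simp
  moreover have "card (T ?B ?B) = CA Y pb" unfolding T_def CA_def using TAA[OF fb] by simp
  moreover have "card (T ?A ?B) = H_ab Y pa pb (length pa) (length pb) o'"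
    unfolding T_def using TAB[OF assms(2,3)] by simp
  moreover have "card (T ?B ?A) = H_ab Y pb pa (length pb) (length pa) o'"
    unfolding T_def using TAB[OF assms(3,2)] by simp
  ultimately show ?thesis unfolding T_def V_def by simp
qed

theorem theorem1:
  fixes pa pb :: "'a list" and Y :: "'a \<Rightarrow> bool"
  assumes "distinct pa" and "distinct pb" and "set pa \<inter> set pb = {}"
    and "cnt1 Y pa \<ge> 1" and "cnt0 Y pa \<ge> 1" and "cnt1 Y pb \<ge> 1" and "cnt0 Y pb \<ge> 1"
  shows "cross_ordering pa pb (xOrder (G_hat 0 Y pa pb) pa pb) \<and>
         (\<forall>o'. cross_ordering pa pb o' \<longrightarrow>
                AUC Y pa pb o' \<le> AUC Y pa pb (xOrder (G_hat 0 Y pa pb) pa pb))"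
proof -
  let ?r = "xOrder (G_hat 0 Y pa pb) pa pb"
  note dp = DP[OF refl assms(1,2,3) order_refl order_refl, of Y]
  have por: "po pa pb (length pa) (length pb) ?r" using dp unfolding xOrder_def by blast
  have cr: "cross_ordering pa pb ?r" by (rule po_cross[OF por assms(1,2,3)])
  have "AUC Y pa pb o' \<le> AUC Y pa pb ?r" if co: "cross_ordering pa pb o'" for o'
  proof -
    have "V Y pa pb (length pa) (length pb) o' \<le> V Y pa pb (length pa) (length pb) ?r"
      using dp cross_po[OF co assms(3)] unfolding xOrder_def by blast
    then have "card {(u, v). u \<in> set o' \<and> v \<in> set o' \<and> Y u \<and> \<not> Y v \<and> precedes o' u v}
       \<le> card {(u, v). u \<in> set ?r \<and> v \<in> set ?r \<and> Y u \<and> \<not> Y v \<and> precedes ?r u v}"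
      using count_eq[OF co assms(1,2,3)] count_eq[OF cr assms(1,2,3)] by simp
    then show ?thesis unfolding AUC_def
      by (intro divide_right_mono) simp_all
  qed
  then show ?thesis using cr by blast
qed

end
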